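(* Let $\alpha\ge 1$ and $w>0$. If $p\in\mathcal{P}_{\alpha,w}$ then $T[p]\in\mathcal{P}_{\alpha,w}$.
   Context: For $\alpha\ge 1$ and $w>0$, $\mathcal{P}_{\alpha,w}$ is the set of probability densities $p$ on $[0,\infty)$ with $\int_0^\infty x\,p(x)\,dx=w$ and $M_\alpha(p)=\int_0^\infty x^\alpha p(x)\,dx<\infty$. For a probability density $p$ on $[0,\infty)$, $S[p](x)=\int_x^\infty \frac{p(u)}{u}\,du$ and $T[p](x)=\int_0^x S[p](x-v)\,S[p](v)\,dv$ for $x\ge0$. *)

theory Defs
  imports "HOL-Analysis.Analysis"
begin

text \<open>Densities on [0,inf) are represented as Borel measurable functions with values in
  [0,inf] (type ennreal); only their values on [0,inf) matter.\<close>

definition Pclass :: "real \<Rightarrow> real \<Rightarrow> (real \<Rightarrow> ennreal) set" where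
  "Pclass \<alpha> w = {p. p \<in> borel_measurable borel
      \<and> (\<integral>\<^sup>+ x\<in>{0..}. p x \<partial>lborel) = 1
      \<and> (\<integral>\<^sup>+ x\<in>{0..}. ennreal x * p x \<partial>lborel) = ennreal w
      \<and> (\<integral>\<^sup>+ x\<in>{0..}. ennreal (x powr \<alpha>) * p x \<partial>lborel) < \<infinity>}"

definition Sop :: "(real \<Rightarrow> ennreal) \<Rightarrow> real \<Rightarrow> ennreal" where
  "Sop p x = (\<integral>\<^sup>+ u\<in>{x..}. p u * ennreal (1 / u) \<partial>lborel)"

definition Top :: "(real \<Rightarrow> ennreal) \<Rightarrow> real \<Rightarrow> ennreal" where
  "Top p x = (\<integral>\<^sup>+ v\<in>{0..x}. Sop p (x - v) * Sop p v \<partial>lborel)"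

end

theory Submission
  imports Defs
begin

lemma pred1[measurable]: "Measurable.pred (borel \<Otimes>\<^sub>M borel) (\<lambda>x::real\<times>real. snd x \<in> {fst x..})"
  by (simp only: atLeast_iff) measurable
lemma pred2[measurable]: "Measurable.pred (borel \<Otimes>\<^sub>M borel) (\<lambda>x::real\<times>real. snd x \<in> {0..fst x})"
  by (simp only: atLeastAtMost_iff) measurable

lemma pred3[measurable]: "Measurable.pred (borel \<Otimes>\<^sub>M borel) (\<lambda>x::real\<times>real. fst x \<in> {snd x..})"
  by (simp only: atLeast_iff) measurable

lemma pred4[measurable]: "Measurable.pred borel (\<lambda>x::real. v \<in> {0..x})"
  by (simp only: atLeastAtMost_iff) measurable

lemma Sop_meas[measurable]:
  assumes [measurable]: "p \<in> borel_measurable borel"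
  shows "Sop p \<in> borel_measurable borel"
  unfolding Sop_def
  by measurable

lemma Top_meas:
  assumes [measurable]: "p \<in> borel_measurable borel"
  shows "Top p \<in> borel_measurable borel"
  unfolding Top_def by measurable

lemma Sop_fubini:
  assumes [measurable]: "p \<in> borel_measurable borel" "h \<in> borel_measurable borel"
  shows "(\<integral>\<^sup>+a\<in>{0..}. Sop p a * h a \<partial>lborel) =
    (\<integral>\<^sup>+u\<in>{0..}. p u * ennreal (1/u) * (\<integral>\<^sup>+a\<in>{0..u}. h a \<partial>lborel) \<partial>lborel)"
proof -
  have "(\<integral>\<^sup>+a\<in>{0..}. Sop p a * h a \<partial>lborel) =
     (\<integral>\<^sup>+a. \<integral>\<^sup>+u. p u * ennreal(1/u) * indicator {a..} u * (h a * indicator {0..} a) \<partial>lborel \<partial>lborel)"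
  proof (intro nn_integral_cong)
    fix a :: real
    have "(\<integral>\<^sup>+u. p u * ennreal(1/u) * indicator {a..} u * (h a * indicator {0..} a) \<partial>lborel)
       = (\<integral>\<^sup>+u. p u * ennreal(1/u) * indicator {a..} u \<partial>lborel) * (h a * indicator {0..} a)"
      by (rule nn_integral_multc) measurable
    then show "Sop p a * h a * indicator {0..} a = (\<integral>\<^sup>+u. p u * ennreal(1/u) * indicator {a..} u * (h a * indicator {0..} a) \<partial>lborel)"
      by (simp add: Sop_def mult.assoc)
  qed
  also have "\<dots> = (\<integral>\<^sup>+u. \<integral>\<^sup>+a. p u * ennreal(1/u) * indicator {a..} u * (h a * indicator {0..} a) \<partial>lborel \<partial>lborel)"
    by (rule lborel_pair.Fubini') measurable
  also have "\<dots> = (\<integral>\<^sup>+u. (p u * ennreal(1/u) * indicator {0..} u) * (\<integral>\<^sup>+a. h a * indicator {0..u} a \<partial>lborel) \<partial>lborel)"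
  proof (intro nn_integral_cong)
    fix u :: real
    have "(\<integral>\<^sup>+a. p u * ennreal(1/u) * indicator {a..} u * (h a * indicator {0..} a) \<partial>lborel)
       = (\<integral>\<^sup>+a. (p u * ennreal(1/u) * indicator {0..} u) * (h a * indicator {0..u} a) \<partial>lborel)"
      by (intro nn_integral_cong) (auto simp: indicator_def)
    also have "\<dots> = (p u * ennreal(1/u) * indicator {0..} u) * (\<integral>\<^sup>+a. h a * indicator {0..u} a \<partial>lborel)"
      by (rule nn_integral_cmult) measurable
    finally show "(\<integral>\<^sup>+a. p u * ennreal(1/u) * indicator {a..} u * (h a * indicator {0..} a) \<partial>lborel)
       = (p u * ennreal(1/u) * indicator {0..} u) * (\<integral>\<^sup>+a. h a * indicator {0..u} a \<partial>lborel)" .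
  qed
  also have "\<dots> = (\<integral>\<^sup>+u\<in>{0..}. p u * ennreal (1/u) * (\<integral>\<^sup>+a\<in>{0..u}. h a \<partial>lborel) \<partial>lborel)"
    by (intro nn_integral_cong) (simp add: ac_simps)
  finally show ?thesis .
qed

lemma Top_fubini:
  assumes [measurable]: "p \<in> borel_measurable borel" "g \<in> borel_measurable borel"
  shows "(\<integral>\<^sup>+x\<in>{0..}. Top p x * g x \<partial>lborel) =
    (\<integral>\<^sup>+v\<in>{0..}. Sop p v * (\<integral>\<^sup>+a\<in>{0..}. Sop p a * g (a + v) \<partial>lborel) \<partial>lborel)"
proof -
  have "(\<integral>\<^sup>+x\<in>{0..}. Top p x * g x \<partial>lborel) =
     (\<integral>\<^sup>+x. \<integral>\<^sup>+v. Sop p (x - v) * Sop p v * indicator {0..x} v * (g x * indicator {0..} x) \<partial>lborel \<partial>lborel)"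
  proof (intro nn_integral_cong)
    fix x :: real
    have "(\<integral>\<^sup>+v. Sop p (x - v) * Sop p v * indicator {0..x} v * (g x * indicator {0..} x) \<partial>lborel)
       = (\<integral>\<^sup>+v. Sop p (x - v) * Sop p v * indicator {0..x} v \<partial>lborel) * (g x * indicator {0..} x)"
      by (rule nn_integral_multc) measurable
    then show "Top p x * g x * indicator {0..} x = (\<integral>\<^sup>+v. Sop p (x - v) * Sop p v * indicator {0..x} v * (g x * indicator {0..} x) \<partial>lborel)"
      by (simp add: Top_def mult.assoc)
  qed
  also have "\<dots> = (\<integral>\<^sup>+v. \<integral>\<^sup>+x. Sop p (x - v) * Sop p v * indicator {0..x} v * (g x * indicator {0..} x) \<partial>lborel \<partial>lborel)"
    by (rule lborel_pair.Fubini'[symmetric]) measurable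
  also have "\<dots> = (\<integral>\<^sup>+v. (Sop p v * indicator {0..} v) * (\<integral>\<^sup>+a. Sop p a * g (a + v) * indicator {0..} a \<partial>lborel) \<partial>lborel)"
  proof (intro nn_integral_cong)
    fix v :: real
    define F where "F = (\<lambda>x. Sop p (x - v) * Sop p v * indicator {0..x} v * (g x * indicator {0..} x))"
    have Fm: "F \<in> borel_measurable borel" unfolding F_def by measurable
    have "(\<integral>\<^sup>+x. Sop p (x - v) * Sop p v * indicator {0..x} v * (g x * indicator {0..} x) \<partial>lborel)
       = ennreal \<bar>1::real\<bar> * (\<integral>\<^sup>+a. Sop p ((v + 1 * a) - v) * Sop p v * indicator {0..(v + 1 * a)} v * (g (v + 1 * a) * indicator {0..} (v + 1 * a)) \<partial>lborel)"
      using nn_integral_real_affine[OF Fm, of 1 v] by (simp add: F_def)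
    also have "\<dots> = (\<integral>\<^sup>+a. (Sop p v * indicator {0..} v) * (Sop p a * g (a + v) * indicator {0..} a) \<partial>lborel)"
      by (simp, intro nn_integral_cong) (auto simp: indicator_def add.commute mult_ac)
    also have "\<dots> = (Sop p v * indicator {0..} v) * (\<integral>\<^sup>+a. Sop p a * g (a + v) * indicator {0..} a \<partial>lborel)"
      by (rule nn_integral_cmult) measurable
    finally show "(\<integral>\<^sup>+x. Sop p (x - v) * Sop p v * indicator {0..x} v * (g x * indicator {0..} x) \<partial>lborel)
       = (Sop p v * indicator {0..} v) * (\<integral>\<^sup>+a. Sop p a * g (a + v) * indicator {0..} a \<partial>lborel)" .
  qed
  also have "\<dots> = (\<integral>\<^sup>+v\<in>{0..}. Sop p v * (\<integral>\<^sup>+a\<in>{0..}. Sop p a * g (a + v) \<partial>lborel) \<partial>lborel)"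
    by (intro nn_integral_cong) (simp add: ac_simps)
  finally show ?thesis .
qed

lemma set_nn_add0:
  assumes [measurable]: "f \<in> borel_measurable borel" "g \<in> borel_measurable borel"
  shows "(\<integral>\<^sup>+x\<in>{0::real..}. f x + g x \<partial>lborel) = (\<integral>\<^sup>+x\<in>{0..}. f x \<partial>lborel) + (\<integral>\<^sup>+x\<in>{0..}. g x \<partial>lborel)"
proof -
  have "(\<integral>\<^sup>+x\<in>{0::real..}. f x + g x \<partial>lborel) = (\<integral>\<^sup>+x. f x * indicator {0..} x + g x * indicator {0..} x \<partial>lborel)"
    by (intro nn_integral_cong) (simp add: distrib_right)
  also have "\<dots> = (\<integral>\<^sup>+x\<in>{0..}. f x \<partial>lborel) + (\<integral>\<^sup>+x\<in>{0..}. g x \<partial>lborel)"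
    by (rule nn_integral_add) measurable
  finally show ?thesis .
qed

lemma set_nn_cmult0:
  assumes [measurable]: "f \<in> borel_measurable borel"
  shows "(\<integral>\<^sup>+x\<in>{0::real..}. c * f x \<partial>lborel) = c * (\<integral>\<^sup>+x\<in>{0..}. f x \<partial>lborel)"
proof -
  have "(\<integral>\<^sup>+x\<in>{0::real..}. c * f x \<partial>lborel) = (\<integral>\<^sup>+x. c * (f x * indicator {0..} x) \<partial>lborel)"
    by (intro nn_integral_cong) (simp add: mult.assoc)
  also have "\<dots> = c * (\<integral>\<^sup>+x\<in>{0..}. f x \<partial>lborel)"
    by (rule nn_integral_cmult) measurable
  finally show ?thesis .
qed

lemma cancel_u:
  assumes "\<And>u. 0 \<le> u \<Longrightarrow> 0 \<le> c u"
  shows "(\<integral>\<^sup>+u\<in>{0..}. p u * ennreal (1/u) * ennreal (u * c u) \<partial>lborel) = (\<integral>\<^sup>+u\<in>{0..}. p u * ennreal (c u) \<partial>lborel)"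
proof (rule nn_integral_cong_AE)
  show "AE u in lborel. p u * ennreal (1/u) * ennreal (u * c u) * indicator {0..} u = p u * ennreal (c u) * indicator {0..} u"
    using AE_lborel_singleton[of "0::real"]
  proof eventually_elim
    case (elim u)
    show ?case
    proof (cases "0 \<le> u")
      case True
      then have "u > 0" using elim by simp
      then have "ennreal (1/u) * ennreal (u * c u) = ennreal (c u)"
        using assms[OF True] by (simp add: ennreal_mult[symmetric])
      then show ?thesis by (simp add: mult.assoc)
    qed simp
  qed
qed

lemma pow_bound:
  fixes a v \<alpha> :: real
  assumes "0 \<le> a" "0 \<le> v" "0 \<le> \<alpha>"
  shows "(a + v) powr \<alpha> \<le> 2 powr \<alpha> * (a powr \<alpha> + v powr \<alpha>)"
proof -
  have "(a + v) powr \<alpha> \<le> (2 * max a v) powr \<alpha>"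
    by (rule powr_mono2) (use assms in auto)
  also have "\<dots> = 2 powr \<alpha> * max a v powr \<alpha>"
    using assms by (simp add: powr_mult)
  also have "\<dots> \<le> 2 powr \<alpha> * (a powr \<alpha> + v powr \<alpha>)"
    by (intro mult_left_mono) (auto simp: max_def)
  finally show ?thesis .
qed

lemma S1:
  assumes [measurable]: "p \<in> borel_measurable borel" and P1: "(\<integral>\<^sup>+ x\<in>{0..}. p x \<partial>lborel) = 1"
  shows "(\<integral>\<^sup>+a\<in>{0..}. Sop p a \<partial>lborel) = 1"
proof -
  have "(\<integral>\<^sup>+a\<in>{0..}. Sop p a \<partial>lborel) = (\<integral>\<^sup>+a\<in>{0..}. Sop p a * (\<lambda>_. 1) a \<partial>lborel)" by simp
  also have "\<dots> = (\<integral>\<^sup>+u\<in>{0..}. p u * ennreal (1/u) * (\<integral>\<^sup>+a\<in>{0..u}. (\<lambda>_. 1) a \<partial>lborel) \<partial>lborel)"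
    by (rule Sop_fubini) auto
  also have "\<dots> = (\<integral>\<^sup>+u\<in>{0..}. p u * ennreal (1/u) * ennreal (u * 1) \<partial>lborel)"
  proof (intro nn_integral_cong)
    fix u :: real
    show "p u * ennreal (1/u) * (\<integral>\<^sup>+a\<in>{0..u}. (\<lambda>_. 1) a \<partial>lborel) * indicator {0..} u =
      p u * ennreal (1/u) * ennreal (u * 1) * indicator {0..} u"
      by (cases "0 \<le> u") auto
  qed
  also have "\<dots> = (\<integral>\<^sup>+u\<in>{0..}. p u * ennreal 1 \<partial>lborel)"
    by (rule cancel_u) simp
  finally show ?thesis using P1 by simp
qed

lemma S2:
  assumes [measurable]: "p \<in> borel_measurable borel" and Pw: "(\<integral>\<^sup>+ x\<in>{0..}. ennreal x * p x \<partial>lborel) = ennreal w"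
  shows "(\<integral>\<^sup>+a\<in>{0..}. Sop p a * ennreal a \<partial>lborel) = ennreal (w / 2)"
proof -
  have "(\<integral>\<^sup>+a\<in>{0..}. Sop p a * ennreal a \<partial>lborel) = (\<integral>\<^sup>+u\<in>{0..}. p u * ennreal (1/u) * (\<integral>\<^sup>+a\<in>{0..u}. ennreal a \<partial>lborel) \<partial>lborel)"
    by (rule Sop_fubini) auto
  also have "\<dots> = (\<integral>\<^sup>+u\<in>{0..}. p u * ennreal (1/u) * ennreal (u * (u / 2)) \<partial>lborel)"
  proof (intro nn_integral_cong)
    fix u :: real
    show "p u * ennreal (1/u) * (\<integral>\<^sup>+a\<in>{0..u}. ennreal a \<partial>lborel) * indicator {0..} u =
      p u * ennreal (1/u) * ennreal (u * (u / 2)) * indicator {0..} u"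
    proof (cases "0 \<le> u")
      case True
      have "(\<integral>\<^sup>+a. ennreal a * indicator {0..u} a \<partial>lborel) = ennreal ((u\<^sup>2 - 0\<^sup>2)/2)"
        by (rule nn_integral_has_integral_lebesgue') (use ident_has_integral[OF True] in auto)
      then show ?thesis by (simp add: power2_eq_square)
    qed simp
  qed
  also have "\<dots> = (\<integral>\<^sup>+u\<in>{0..}. p u * ennreal (u / 2) \<partial>lborel)"
    by (rule cancel_u) simp
  also have "\<dots> = (\<integral>\<^sup>+u\<in>{0..}. ennreal (1/2) * (ennreal u * p u) \<partial>lborel)"
  proof (intro nn_integral_cong)
    fix u :: real
    show "p u * ennreal (u / 2) * indicator {0..} u = ennreal (1/2) * (ennreal u * p u) * indicator {0..} u"
    proof (cases "0 \<le> u")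
      case True
      then have "ennreal (u / 2) = ennreal (1/2) * ennreal u"
        by (subst ennreal_mult[symmetric]) auto
      then show ?thesis by (simp only: mult_ac)
    qed simp
  qed
  also have "\<dots> = ennreal (1/2) * ennreal w"
    by (subst set_nn_cmult0) (auto simp: Pw)
  also have "\<dots> = ennreal (w / 2)"
    by (subst ennreal_mult'[symmetric]) auto
  finally show ?thesis .
qed

lemma S3:
  assumes [measurable]: "p \<in> borel_measurable borel" and "0 \<le> \<alpha>"
  shows "(\<integral>\<^sup>+a\<in>{0..}. Sop p a * ennreal (a powr \<alpha>) \<partial>lborel) \<le> (\<integral>\<^sup>+ x\<in>{0..}. ennreal (x powr \<alpha>) * p x \<partial>lborel)"
proof -
  have "(\<integral>\<^sup>+a\<in>{0..}. Sop p a * ennreal (a powr \<alpha>) \<partial>lborel) = (\<integral>\<^sup>+u\<in>{0..}. p u * ennreal (1/u) * (\<integral>\<^sup>+a\<in>{0..u}. ennreal (a powr \<alpha>) \<partial>lborel) \<partial>lborel)"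
    by (rule Sop_fubini) auto
  also have "\<dots> \<le> (\<integral>\<^sup>+u\<in>{0..}. p u * ennreal (1/u) * ennreal (u * u powr \<alpha>) \<partial>lborel)"
  proof (intro nn_integral_mono)
    fix u :: real
    show "p u * ennreal (1/u) * (\<integral>\<^sup>+a\<in>{0..u}. ennreal (a powr \<alpha>) \<partial>lborel) * indicator {0..} u \<le>
      p u * ennreal (1/u) * ennreal (u * u powr \<alpha>) * indicator {0..} u"
    proof (cases "0 \<le> u")
      case True
      have "(\<integral>\<^sup>+a\<in>{0..u}. ennreal (a powr \<alpha>) \<partial>lborel) \<le> (\<integral>\<^sup>+a. ennreal (u powr \<alpha>) * indicator {0..u} a \<partial>lborel)"
        by (intro nn_integral_mono) (auto simp: indicator_def intro!: powr_mono2 assms)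
      also have "\<dots> = ennreal (u powr \<alpha>) * ennreal u"
        using True by (simp add: nn_integral_cmult_indicator)
      also have "\<dots> = ennreal (u * u powr \<alpha>)"
        using True by (simp add: ennreal_mult[symmetric] mult.commute)
      finally show ?thesis by (intro mult_right_mono mult_left_mono) auto
    qed simp
  qed
  also have "\<dots> = (\<integral>\<^sup>+u\<in>{0..}. p u * ennreal (u powr \<alpha>) \<partial>lborel)"
    by (rule cancel_u) simp
  also have "\<dots> = (\<integral>\<^sup>+ x\<in>{0..}. ennreal (x powr \<alpha>) * p x \<partial>lborel)"
    by (simp add: mult.commute)
  finally show ?thesis .
qed

theorem lemma2:
  fixes \<alpha> w :: real and p :: "real \<Rightarrow> ennreal"
  assumes "\<alpha> \<ge> 1" and "w > 0" and "p \<in> Pclass \<alpha> w"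
  shows "Top p \<in> Pclass \<alpha> w"
proof -
  have pm[measurable]: "p \<in> borel_measurable borel"
    and P1: "(\<integral>\<^sup>+ x\<in>{0..}. p x \<partial>lborel) = 1"
    and Pw: "(\<integral>\<^sup>+ x\<in>{0..}. ennreal x * p x \<partial>lborel) = ennreal w"
    and Pa: "(\<integral>\<^sup>+ x\<in>{0..}. ennreal (x powr \<alpha>) * p x \<partial>lborel) < \<infinity>"
    using assms(3) by (auto simp: Pclass_def)
  have a0: "0 \<le> \<alpha>" using assms(1) by simp
  note Sm = Sop_meas[OF pm, measurable]
  have s1: "(\<integral>\<^sup>+a\<in>{0..}. Sop p a \<partial>lborel) = 1" by (rule S1[OF pm P1])
  have s2: "(\<integral>\<^sup>+a\<in>{0..}. Sop p a * ennreal a \<partial>lborel) = ennreal (w / 2)" by (rule S2[OF pm Pw])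
  define B where "B = (\<integral>\<^sup>+a\<in>{0..}. Sop p a * ennreal (a powr \<alpha>) \<partial>lborel)"
  have s3: "B < \<infinity>" unfolding B_def using S3[OF pm a0] Pa by (rule le_less_trans)
  have T1: "(\<integral>\<^sup>+ x\<in>{0..}. Top p x \<partial>lborel) = 1"
    using Top_fubini[OF pm, of "\<lambda>_. 1"] s1 by simp
  have T2: "(\<integral>\<^sup>+ x\<in>{0..}. ennreal x * Top p x \<partial>lborel) = ennreal w"
  proof -
    have "(\<integral>\<^sup>+ x\<in>{0..}. ennreal x * Top p x \<partial>lborel) = (\<integral>\<^sup>+ x\<in>{0..}. Top p x * ennreal x \<partial>lborel)"
      by (simp add: mult.commute)
    also have "\<dots> = (\<integral>\<^sup>+v\<in>{0..}. Sop p v * (\<integral>\<^sup>+a\<in>{0..}. Sop p a * ennreal (a + v) \<partial>lborel) \<partial>lborel)"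
      by (rule Top_fubini) auto
    also have "\<dots> = (\<integral>\<^sup>+v\<in>{0..}. Sop p v * ennreal (w/2) + ennreal v * Sop p v \<partial>lborel)"
    proof (intro nn_integral_cong)
      fix v :: real
      show "Sop p v * (\<integral>\<^sup>+a\<in>{0..}. Sop p a * ennreal (a + v) \<partial>lborel) * indicator {0..} v =
        (Sop p v * ennreal (w/2) + ennreal v * Sop p v) * indicator {0..} v"
      proof (cases "0 \<le> v")
        case True
        have "(\<integral>\<^sup>+a\<in>{0..}. Sop p a * ennreal (a + v) \<partial>lborel) = (\<integral>\<^sup>+a\<in>{0..}. Sop p a * ennreal a + ennreal v * Sop p a \<partial>lborel)"
          by (intro nn_integral_cong) (auto simp: indicator_def True ennreal_plus distrib_left mult.commute)
        also have "\<dots> = ennreal (w/2) + ennreal v"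
          by (subst set_nn_add0) (auto simp: s2 set_nn_cmult0 s1)
        finally show ?thesis by (simp add: distrib_left mult_ac)
      qed simp
    qed
    also have "\<dots> = (\<integral>\<^sup>+v\<in>{0..}. Sop p v * ennreal (w/2) \<partial>lborel) + (\<integral>\<^sup>+v\<in>{0..}. ennreal v * Sop p v \<partial>lborel)"
      by (rule set_nn_add0) measurable
    also have "\<dots> = ennreal (w/2) + ennreal (w/2)"
    proof -
      have h1: "(\<integral>\<^sup>+v\<in>{0..}. Sop p v * ennreal (w/2) \<partial>lborel) = ennreal (w/2)"
        using set_nn_cmult0[OF Sm, of "ennreal (w/2)"] s1 by (simp only: mult.commute mult_1 mult_1_right)
      have h2: "(\<integral>\<^sup>+v\<in>{0..}. ennreal v * Sop p v \<partial>lborel) = ennreal (w/2)"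
        using s2 by (simp only: mult.commute)
      show ?thesis unfolding h1 h2 ..
    qed
    also have "\<dots> = ennreal w"
      using assms(2) by (subst ennreal_plus[symmetric]) auto
    finally show ?thesis .
  qed
  have T3: "(\<integral>\<^sup>+ x\<in>{0..}. ennreal (x powr \<alpha>) * Top p x \<partial>lborel) < \<infinity>"
  proof -
    have "(\<integral>\<^sup>+ x\<in>{0..}. ennreal (x powr \<alpha>) * Top p x \<partial>lborel) = (\<integral>\<^sup>+ x\<in>{0..}. Top p x * ennreal (x powr \<alpha>) \<partial>lborel)"
      by (simp add: mult.commute)
    also have "\<dots> = (\<integral>\<^sup>+v\<in>{0..}. Sop p v * (\<integral>\<^sup>+a\<in>{0..}. Sop p a * ennreal ((a + v) powr \<alpha>) \<partial>lborel) \<partial>lborel)"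
      by (rule Top_fubini) auto
    also have "\<dots> \<le> (\<integral>\<^sup>+v\<in>{0..}. ennreal (2 powr \<alpha>) * (Sop p v * B + ennreal (v powr \<alpha>) * Sop p v) \<partial>lborel)"
    proof (intro nn_integral_mono)
      fix v :: real
      show "Sop p v * (\<integral>\<^sup>+a\<in>{0..}. Sop p a * ennreal ((a + v) powr \<alpha>) \<partial>lborel) * indicator {0..} v \<le>
        ennreal (2 powr \<alpha>) * (Sop p v * B + ennreal (v powr \<alpha>) * Sop p v) * indicator {0..} v"
      proof (cases "0 \<le> v")
        case True
        have "(\<integral>\<^sup>+a\<in>{0..}. Sop p a * ennreal ((a + v) powr \<alpha>) \<partial>lborel) \<le>
           (\<integral>\<^sup>+a\<in>{0..}. ennreal (2 powr \<alpha>) * (Sop p a * ennreal (a powr \<alpha>) + ennreal (v powr \<alpha>) * Sop p a) \<partial>lborel)"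
        proof (intro nn_integral_mono)
          fix a :: real
          show "Sop p a * ennreal ((a + v) powr \<alpha>) * indicator {0..} a \<le>
            ennreal (2 powr \<alpha>) * (Sop p a * ennreal (a powr \<alpha>) + ennreal (v powr \<alpha>) * Sop p a) * indicator {0..} a"
          proof (cases "0 \<le> a")
            case Ta: True
            have "ennreal ((a + v) powr \<alpha>) \<le> ennreal (2 powr \<alpha> * (a powr \<alpha> + v powr \<alpha>))"
              using pow_bound[OF Ta True a0] by (rule ennreal_leI)
            also have "\<dots> = ennreal (2 powr \<alpha>) * (ennreal (a powr \<alpha>) + ennreal (v powr \<alpha>))"
              by (simp add: ennreal_mult ennreal_plus)
            finally have "Sop p a * ennreal ((a + v) powr \<alpha>) \<le> Sop p a * (ennreal (2 powr \<alpha>) * (ennreal (a powr \<alpha>) + ennreal (v powr \<alpha>)))"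
              by (rule mult_left_mono) simp
            then show ?thesis using Ta by (simp add: distrib_left mult_ac)
          qed simp
        qed
        also have "\<dots> = ennreal (2 powr \<alpha>) * (B + ennreal (v powr \<alpha>))"
          by (subst set_nn_cmult0, measurable, subst set_nn_add0) (auto simp: B_def set_nn_cmult0 s1)
        finally have "Sop p v * (\<integral>\<^sup>+a\<in>{0..}. Sop p a * ennreal ((a + v) powr \<alpha>) \<partial>lborel) \<le>
            Sop p v * (ennreal (2 powr \<alpha>) * (B + ennreal (v powr \<alpha>)))"
          by (rule mult_left_mono) simp
        then show ?thesis using True by (simp add: distrib_left mult_ac)
      qed simp
    qed
    also have "\<dots> = ennreal (2 powr \<alpha>) * ((\<integral>\<^sup>+v\<in>{0..}. Sop p v * B \<partial>lborel) + (\<integral>\<^sup>+v\<in>{0..}. ennreal (v powr \<alpha>) * Sop p v \<partial>lborel))"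
      by (subst set_nn_cmult0, measurable, subst set_nn_add0) auto
    also have "\<dots> = ennreal (2 powr \<alpha>) * (B + B)"
    proof -
      have h1: "(\<integral>\<^sup>+v\<in>{0..}. Sop p v * B \<partial>lborel) = B"
        using set_nn_cmult0[OF Sm, of B] s1 by (simp only: mult.commute mult_1 mult_1_right)
      have h2: "(\<integral>\<^sup>+v\<in>{0..}. ennreal (v powr \<alpha>) * Sop p v \<partial>lborel) = B"
        unfolding B_def by (simp only: mult.commute)
      show ?thesis unfolding h1 h2 ..
    qed
    also have "\<dots> < \<infinity>"
      using s3 by (simp add: ennreal_mult_less_top)
    finally show ?thesis .
  qed
  show ?thesis
    unfolding Pclass_def using Top_meas[OF pm] T1 T2 T3 by simp
qed

end
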